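(* Let $\Omega\subset\mathbb{R}^n$ be open, let $(\alpha_i)$ be a sequence of regular monotone set functions on $\Omega$ weakly converging to a regular monotone set function $\alpha$, and let $K_j$ be a decreasing sequence of compact subsets of $\Omega$ with $K:=\bigcap_jK_j$ such that $\alpha(K)=0$. Then $$\lim_{j\to\infty}\limsup_{i\to\infty}\alpha_i(K_j)=0.$$
   Context: A set function $\alpha:\mathcal{P}(\Omega)\to[0,\infty]$ (defined on all subsets of $\Omega$) is monotone if $\alpha(E)\le\alpha(F)$ whenever $E\subset F$. A monotone $\alpha$ is regular if $\alpha(A)=\sup\{\alpha(K):K\subset A,\ K\text{ compact}\}$ for every open $A\subset\Omega$, and $\alpha(E)=\inf\{\alpha(A):E\subset A\subset\Omega,\ A\text{ open}\}$ for every $E\subset\Omega$. A sequence of regular monotone set functions $\alpha_i$ weakly converges to a monotone set function $\alpha$ if $\liminf_i\alpha_i(A)\ge\alpha(A)$ for every open $A\subset\Omega$ and $\limsup_i\alpha_i(K)\le\alpha(K)$ for every compact $K\subset\Omega$. *)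

theory Defs
  imports "HOL-Analysis.Analysis" "HOL-Library.Extended_Nonnegative_Real"
begin

text \<open>Set functions on subsets of an open set \<Omega>, with values in [0,\<infinity>] (ennreal).
  Only the values on subsets of \<Omega> are relevant.\<close>

definition monotone_sf :: "'a::euclidean_space set \<Rightarrow> ('a set \<Rightarrow> ennreal) \<Rightarrow> bool" where
  "monotone_sf \<Omega> \<alpha> \<longleftrightarrow> (\<forall>E F. E \<subseteq> F \<and> F \<subseteq> \<Omega> \<longrightarrow> \<alpha> E \<le> \<alpha> F)"

definition regular_sf :: "'a::euclidean_space set \<Rightarrow> ('a set \<Rightarrow> ennreal) \<Rightarrow> bool" where
  "regular_sf \<Omega> \<alpha> \<longleftrightarrow> monotone_sf \<Omega> \<alpha> \<and>
     (\<forall>A. open A \<and> A \<subseteq> \<Omega> \<longrightarrow> \<alpha> A = (SUP K\<in>{K. compact K \<and> K \<subseteq> A}. \<alpha> K)) \<and>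
     (\<forall>E. E \<subseteq> \<Omega> \<longrightarrow> \<alpha> E = (INF A\<in>{A. open A \<and> E \<subseteq> A \<and> A \<subseteq> \<Omega>}. \<alpha> A))"

definition weak_conv_sf :: "'a::euclidean_space set \<Rightarrow> (nat \<Rightarrow> 'a set \<Rightarrow> ennreal) \<Rightarrow> ('a set \<Rightarrow> ennreal) \<Rightarrow> bool" where
  "weak_conv_sf \<Omega> \<alpha>s \<alpha> \<longleftrightarrow>
     (\<forall>A. open A \<and> A \<subseteq> \<Omega> \<longrightarrow> liminf (\<lambda>i. \<alpha>s i A) \<ge> \<alpha> A) \<and>
     (\<forall>K. compact K \<and> K \<subseteq> \<Omega> \<longrightarrow> limsup (\<lambda>i. \<alpha>s i K) \<le> \<alpha> K)"

end

theory Submission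
  imports Defs
begin

lemma nested_compact_in_open:
  fixes Ks :: "nat \<Rightarrow> 'a::euclidean_space set"
  assumes cK: "\<And>j. compact (Ks j)" and dec: "\<And>j. Ks (Suc j) \<subseteq> Ks j"
    and A: "open A" "(\<Inter>j. Ks j) \<subseteq> A"
  shows "\<exists>j. Ks j \<subseteq> A"
proof (rule ccontr)
  assume nx: "\<not> (\<exists>j. Ks j \<subseteq> A)"
  have mono: "Ks m \<subseteq> Ks j" if "j \<le> m" for j m
    using lift_Suc_antimono_le[of Ks, OF dec that] .
  have S: "compact (Ks 0 - A)" using cK A(1) by (simp add: compact_diff)
  have "(Ks 0 - A) \<inter> \<Inter>(range Ks) \<noteq> {}"
  proof (rule compact_imp_fip[OF S])
    show "closed T" if "T \<in> range Ks" for T using that cK compact_imp_closed by auto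
  next
    fix F' assume F': "finite F'" "F' \<subseteq> range Ks"
    then obtain J where J: "finite J" "F' = Ks ` J" by (meson finite_subset_image)
    define m where "m = Max (insert 0 J)"
    have "Ks m \<subseteq> Ks x" if "x \<in> J" for x
      using J mono that unfolding m_def by (meson Max_ge finite.insertI insertCI)
    then have "Ks m \<subseteq> \<Inter>F'" using J by auto
    moreover have "Ks m \<subseteq> Ks 0" using mono by auto
    moreover have "\<not> Ks m \<subseteq> A" using nx by blast
    ultimately show "(Ks 0 - A) \<inter> \<Inter>F' \<noteq> {}" by blast
  qed
  then show False using A(2) by blast
qed

theorem proposition22:
  fixes \<Omega> :: "'a::euclidean_space set"
    and \<alpha>s :: "nat \<Rightarrow> 'a set \<Rightarrow> ennreal" and \<alpha> :: "'a set \<Rightarrow> ennreal"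
    and Ks :: "nat \<Rightarrow> 'a set"
  assumes "open \<Omega>"
    and "\<And>i. regular_sf \<Omega> (\<alpha>s i)"
    and "regular_sf \<Omega> \<alpha>"
    and "weak_conv_sf \<Omega> \<alpha>s \<alpha>"
    and "\<And>j. compact (Ks j)" and "\<And>j. Ks j \<subseteq> \<Omega>"
    and "\<And>j. Ks (Suc j) \<subseteq> Ks j"
    and "\<alpha> (\<Inter>j. Ks j) = 0"
  shows "(\<lambda>j. limsup (\<lambda>i. \<alpha>s i (Ks j))) \<longlonglongrightarrow> 0"
proof (rule order_tendstoI)
  fix a :: ennreal assume "a < 0" then show "\<forall>\<^sub>F j in sequentially. a < limsup (\<lambda>i. \<alpha>s i (Ks j))"
    by simp
next
  fix a :: ennreal assume a: "0 < a"
  have mono: "Ks m \<subseteq> Ks j" if "j \<le> m" for j m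
    using lift_Suc_antimono_le[of Ks, OF assms(7) that] .
  have sub: "(\<Inter>j. Ks j) \<subseteq> \<Omega>" using assms(6) by blast
  have "\<alpha> (\<Inter>j. Ks j) = (INF A\<in>{A. open A \<and> (\<Inter>j. Ks j) \<subseteq> A \<and> A \<subseteq> \<Omega>}. \<alpha> A)"
    using assms(3) sub unfolding regular_sf_def by blast
  then have "(INF A\<in>{A. open A \<and> (\<Inter>j. Ks j) \<subseteq> A \<and> A \<subseteq> \<Omega>}. \<alpha> A) < a"
    using assms(8) a by simp
  then obtain A where A: "open A" "(\<Inter>j. Ks j) \<subseteq> A" "A \<subseteq> \<Omega>" "\<alpha> A < a"
    by (auto simp: INF_less_iff)
  obtain j0 where j0: "Ks j0 \<subseteq> A"
    using nested_compact_in_open[OF assms(5) assms(7) A(1) A(2)] by blast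
  show "\<forall>\<^sub>F j in sequentially. limsup (\<lambda>i. \<alpha>s i (Ks j)) < a"
    unfolding eventually_sequentially
  proof (intro exI allI impI)
    fix j assume "j0 \<le> j"
    then have KA: "Ks j \<subseteq> A" using mono j0 by blast
    have "limsup (\<lambda>i. \<alpha>s i (Ks j)) \<le> \<alpha> (Ks j)"
      using assms(4,5,6) unfolding weak_conv_sf_def by blast
    also have "\<dots> \<le> \<alpha> A"
      using assms(3) KA A(3) unfolding regular_sf_def monotone_sf_def by blast
    finally show "limsup (\<lambda>i. \<alpha>s i (Ks j)) < a" using A(4) by simp
  qed
qed

end
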